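(* Let $q$ be a prime power, $r\geq1$, $\delta\geq2$ integers and $R=r+\delta-1$. Let $a_1,\dots,a_\ell\in\mathbb{F}_q^*$ be distinct and $h=\prod_{i=1}^{\ell}(T^R-a_i)$. Let $P\in\mathbb{F}_q[T]$ be monic irreducible of degree $m$ with $P\equiv1\pmod h$, let $\alpha\in\mathbb{F}_{q^m}$ be a root of $P$, and let $\bar\phi$ be the Drinfeld module over $\mathbb{F}_{q^m}$ with $\bar\phi_T=\alpha+\tau$. Let $s\geq0$ be an integer and let \[f=\sum_{k=0}^{s}g_k(\tau)\,\bar\phi_{T^R}^{\,k}\] be a nonzero element of $\mathbb{F}_{q^m}\{\tau\}$ with each $g_k\in\mathbb{F}_{q^m}\{\tau\}_{\leq r-1}$. If $s+1\leq\ell$, then the $\mathbb{F}_q$-linear map $x\mapsto f(x)$ (where $\tau^i$ acts as $x\mapsto x^{q^i}$) restricted to $\bar\phi[h]$ is not the zero map.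
   Context: $\mathbb{F}_{q^m}\{\tau\}$ is the twisted polynomial ring with $(a\tau^i)(b\tau^j)=ab^{q^i}\tau^{i+j}$; $\mathbb{F}_{q^m}\{\tau\}_{\leq n}$ denotes its elements $\sum_{i=0}^{n}a_i\tau^i$. A Drinfeld module $\bar\phi:\mathbb{F}_q[T]\to\mathbb{F}_{q^m}\{\tau\}$ is the $\mathbb{F}_q$-algebra homomorphism determined by $\bar\phi_T$; powers $\bar\phi_{T^R}^k$ are products in $\mathbb{F}_{q^m}\{\tau\}$. For $a\in\mathbb{F}_q[T]$, $\bar\phi[a]$ is the set of roots in $\overline{\mathbb{F}}_q$ of the $q$-linearized polynomial obtained from $\bar\phi_a$ by replacing $\tau^i$ with $x^{q^i}$. *)

theory Defs
  imports "HOL-Library.Cardinality" "HOL-Algebra.Algebraic_Closure_Type"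
begin

(* Twisted polynomials K{tau} (Frobenius tau: x \<mapsto> x^q) are represented by
   ordinary polynomials: coeff f i is the coefficient of tau^i.
   Only the additive structure is shared with 'a poly; multiplication is tw_mult. *)

definition tw_mult :: "nat \<Rightarrow> 'a::comm_ring_1 poly \<Rightarrow> 'a poly \<Rightarrow> 'a poly" where
  "tw_mult q f g =
     (\<Sum>i\<le>degree f. \<Sum>j\<le>degree g. monom (coeff f i * coeff g j ^ (q ^ i)) (i + j))"

primrec tw_pow :: "nat \<Rightarrow> 'a::comm_ring_1 poly \<Rightarrow> nat \<Rightarrow> 'a poly" where
  "tw_pow q f 0 = 1"
| "tw_pow q f (Suc n) = tw_mult q (tw_pow q f n) f"

definition tw_eval :: "nat \<Rightarrow> 'a::comm_ring_1 poly \<Rightarrow> 'a \<Rightarrow> 'a" where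
  "tw_eval q f x = (\<Sum>i\<le>degree f. coeff f i * x ^ (q ^ i))"

definition drinfeld :: "'q::{field,finite} alg_closure poly \<Rightarrow> 'q poly \<Rightarrow> 'q alg_closure poly" where
  "drinfeld phiT a =
     (\<Sum>i\<le>degree a. smult (to_ac (coeff a i)) (tw_pow CARD('q) phiT i))"

definition drinfeld_torsion :: "'q::{field,finite} alg_closure poly \<Rightarrow> 'q poly \<Rightarrow> 'q alg_closure set" where
  "drinfeld_torsion phiT a = {x. tw_eval CARD('q) (drinfeld phiT a) x = 0}"

definition Fqm :: "nat \<Rightarrow> 'q::{field,finite} alg_closure set" where
  "Fqm m = {x. x ^ (CARD('q) ^ m) = x}"

end

theory Submission
  imports Defs
begin

lemma ff_pow_card:
  fixes x :: "'a::{field,finite}"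
  shows "x ^ CARD('a) = x"
proof (cases "x = 0")
  case False
  have "x * (\<Prod>y\<in>UNIV-{0}. x * y) = x * x ^ (card (UNIV :: 'a set) - 1) * \<Prod>(UNIV-{0})"
    by (simp add: prod.distrib mult_ac)
  also have "x * x ^ (card (UNIV :: 'a set) - 1) = x ^ Suc (card (UNIV :: 'a set) - 1)"
    by (subst power_Suc) auto
  also have "Suc (card (UNIV :: 'a set) - 1) = card (UNIV :: 'a set)"
    using finite_UNIV_card_ge_0[where ?'a = 'a] by simp
  also have "(\<Prod>y\<in>UNIV-{0}. x * y) = (\<Prod>y\<in>UNIV-{0}. y)"
    by (rule prod.reindex_bij_witness[of _ "\<lambda>y. y / x" "\<lambda>y. x * y"]) (use False in auto)
  finally show ?thesis
    by simp
qed (use finite_UNIV_card_ge_0[where ?'a = 'a] in auto)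

lemma card_ge2: "CARD('a::{field,finite}) \<ge> 2"
proof -
  have "card {0::'a, 1} \<le> CARD('a)" by (rule card_mono) auto
  then show ?thesis by simp
qed

lemma choose_zero:
  assumes "0 < k" "k < CARD('a::{field,finite})"
  shows "of_nat (CARD('a) choose k) = (0::'a)"
proof -
  define q where "q = CARD('a)"
  define D :: "'a poly" where "D = (\<Sum>k\<in>{1..<q}. monom (of_nat (q choose k)) k)"
  have q2: "q \<ge> 2" using card_ge2[where 'a='a] by (simp add: q_def)
  have roots: "poly D x = 0" for x :: 'a
  proof -
    have "(x + 1) ^ q = (\<Sum>k\<le>q. of_nat (q choose k) * x ^ k * 1 ^ (q - k))"
      by (rule binomial_ring)
    also have "{..q} = insert 0 (insert q {1..<q})" using q2 by auto
    also have "(\<Sum>k\<in>insert 0 (insert q {1..<q}). of_nat (q choose k) * x ^ k * 1 ^ (q - k))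
       = 1 + (x ^ q + (\<Sum>k\<in>{1..<q}. of_nat (q choose k) * x ^ k))"
      using q2 by (subst sum.insert; simp)+
    finally have "(x + 1) ^ q = 1 + (x ^ q + poly D x)"
      by (simp add: D_def poly_sum poly_monom)
    moreover have "(x+1)^q = x + 1" "x ^ q = x" using ff_pow_card q_def by metis+
    ultimately show ?thesis by simp
  qed
  have "D = 0"
  proof (rule ccontr)
    assume "D \<noteq> 0"
    hence "card {x. poly D x = 0} \<le> degree D" by (rule card_poly_roots_bound)
    moreover have "degree D \<le> q - 1" unfolding D_def
      by (rule degree_sum_le) (auto intro: order.trans[OF degree_monom_le])
    ultimately have "q \<le> q - 1" using roots q_def card_ge2[where 'a='a] by simp
    then show False using q2 by linarith
  qed
  hence "coeff D k = 0" by simp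
  moreover have "coeff D k = of_nat (q choose k)"
    unfolding D_def coeff_sum coeff_monom using assms q_def
    by (subst sum.delta) auto
  ultimately show ?thesis by (simp add: q_def)
qed

lemma frob_add:
  fixes x y :: "'a::{field,finite} alg_closure"
  shows "(x + y) ^ CARD('a) = x ^ CARD('a) + y ^ CARD('a)"
proof -
  define q where "q = CARD('a)"
  have q2: "q \<ge> 2" using card_ge2[where 'a='a] by (simp add: q_def)
  have "(x + y) ^ q = (\<Sum>k\<le>q. of_nat (q choose k) * x ^ k * y ^ (q - k))"
    by (rule binomial_ring)
  also have "{..q} = insert 0 (insert q {1..<q})" using q2 by auto
  also have "(\<Sum>k\<in>{1..<q}. of_nat (q choose k) * x ^ k * y ^ (q - k)) = 0"
  proof (rule sum.neutral, safe)
    fix k assume "k \<in> {1..<q}"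
    hence "of_nat (q choose k) = (0::'a)" using choose_zero[where 'a='a] q_def by auto
    hence "of_nat (q choose k) = (0::'a alg_closure)"
      by (metis to_ac_0 to_ac_of_nat)
    then show "of_nat (q choose k) * x ^ k * y ^ (q - k) = 0" by simp
  qed
  hence "(\<Sum>k\<in>insert 0 (insert q {1..<q}). of_nat (q choose k) * x ^ k * y ^ (q - k))
       = y ^ q + x ^ q"
    using q2 by (subst sum.insert; simp)+
  finally show ?thesis by (simp add: q_def)
qed

lemma frob_pow_add:
  fixes x y :: "'a::{field,finite} alg_closure"
  shows "(x + y) ^ (CARD('a) ^ n) = x ^ (CARD('a) ^ n) + y ^ (CARD('a) ^ n)"
proof (induction n)
  case (Suc n)
  have e: "z ^ (CARD('a) ^ Suc n) = (z ^ (CARD('a) ^ n)) ^ CARD('a)" for z :: "'a alg_closure"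
    by (metis power_Suc2 power_mult)
  show ?case unfolding e Suc frob_add ..
qed simp

lemma frob_pow_sum:
  fixes f :: "'b \<Rightarrow> 'a::{field,finite} alg_closure"
  shows "(sum f A) ^ (CARD('a) ^ n) = (\<Sum>i\<in>A. f i ^ (CARD('a) ^ n))"
  by (induction A rule: infinite_finite_induct) (simp_all add: frob_pow_add)

lemma to_ac_frob: "to_ac (c::'a::{field,finite}) ^ (CARD('a) ^ n) = to_ac c"
proof (induction n)
  case (Suc n)
  have "to_ac c ^ (CARD('a) ^ Suc n) = (to_ac c ^ CARD('a)) ^ (CARD('a) ^ n)"
    by (simp add: power_mult)
  also have "to_ac c ^ CARD('a) = to_ac c" by (metis to_ac_power ff_pow_card)
  finally show ?case using Suc by simp
qed simp

definition lin :: "('a::{field,finite} alg_closure \<Rightarrow> 'a alg_closure) \<Rightarrow> bool" where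
  "lin F \<longleftrightarrow> (\<forall>x y. F (x + y) = F x + F y) \<and> (\<forall>c x. F (to_ac c * x) = to_ac c * F x)"

lemma lin_add: "lin F \<Longrightarrow> F (x + y) = F x + F y" by (simp add: lin_def)
lemma lin_scal: "lin F \<Longrightarrow> F (to_ac c * x) = to_ac c * F x" by (simp add: lin_def)
lemma lin_zero: "lin F \<Longrightarrow> F 0 = 0"
  by (metis add.right_neutral add_left_cancel lin_add)

lemma if_times0: "(if P then a else 0) * b = (if P then a * b else (0::'a::semiring_0))"
  by simp
lemma lin_sum: "lin F \<Longrightarrow> F (sum g A) = (\<Sum>i\<in>A. F (g i))"
  by (induction A rule: infinite_finite_induct) (simp_all add: lin_zero lin_add)
lemma lin_funpow: "lin F \<Longrightarrow> lin (F ^^ n)"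
  by (induction n) (simp_all add: lin_def)

definition Dop :: "('a::{field,finite} alg_closure \<Rightarrow> 'a alg_closure) \<Rightarrow> 'a poly \<Rightarrow> 'a alg_closure \<Rightarrow> 'a alg_closure" where
  "Dop F a x = (\<Sum>i\<le>degree a. to_ac (coeff a i) * (F ^^ i) x)"

lemma Dop_bound: "degree a \<le> N \<Longrightarrow> Dop F a x = (\<Sum>i\<le>N. to_ac (coeff a i) * (F ^^ i) x)"
  unfolding Dop_def by (rule sum.mono_neutral_left) (auto simp: coeff_eq_0)

lemma Dop_add: "Dop F (a + b) x = Dop F a x + Dop F b x"
proof -
  define N where "N = max (degree a) (degree b)"
  have "degree (a + b) \<le> N" unfolding N_def by (rule degree_add_le) auto
  then show ?thesis
    by (subst (1 2 3) Dop_bound[where N = N]) (auto simp: N_def sum.distrib distrib_right)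
qed

lemma Dop_diff: "Dop F (a - b) x = Dop F a x - Dop F b x"
proof -
  define N where "N = max (degree a) (degree b)"
  have "degree (a - b) \<le> N" unfolding N_def by (rule degree_diff_le) auto
  then show ?thesis
    by (subst (1 2 3) Dop_bound[where N = N]) (auto simp: N_def sum_subtractf left_diff_distrib)
qed

lemma Dop_smult: "Dop F (smult c a) x = to_ac c * Dop F a x"
  by (subst (1 2) Dop_bound[where N = "degree a"]) (auto simp: sum_distrib_left mult.assoc)

lemma Dop_zero [simp]: "Dop F 0 x = 0" by (simp add: Dop_def)

lemma Dop_monom1: "Dop F (monom 1 n) x = (F ^^ n) x"
proof -
  have "Dop F (monom 1 n) x = (\<Sum>i\<le>n. to_ac (coeff (monom 1 n) i) * (F ^^ i) x)"
    by (rule Dop_bound) (simp add: degree_monom_le)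
  also have "\<dots> = (\<Sum>i\<le>n. if i = n then (F ^^ n) x else 0)"
    by (rule sum.cong) (auto simp: coeff_monom)
  also have "\<dots> = (F ^^ n) x" by simp
  finally show ?thesis .
qed

lemma Dop_const: "Dop F [:c:] x = to_ac c * x"
  by (simp add: Dop_def)

lemma Dop_pCons:
  assumes "lin F"
  shows "Dop F (pCons c a) y = to_ac c * y + F (Dop F a y)"
proof -
  have "Dop F (pCons c a) y = (\<Sum>i\<le>Suc (degree a). to_ac (coeff (pCons c a) i) * (F ^^ i) y)"
    by (rule Dop_bound) (simp add: degree_pCons_le)
  also have "\<dots> = to_ac c * y + (\<Sum>i\<le>degree a. to_ac (coeff a i) * (F ^^ Suc i) y)"
    by (subst sum.atMost_Suc_shift) simp
  also have "(\<Sum>i\<le>degree a. to_ac (coeff a i) * (F ^^ Suc i) y) = F (Dop F a y)"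
    unfolding Dop_def using assms by (simp add: lin_sum lin_scal)
  finally show ?thesis .
qed

lemma Dop_mult:
  assumes "lin F"
  shows "Dop F (a * b) x = Dop F a (Dop F b x)"
proof (induction a)
  case (pCons c a)
  have "Dop F (pCons c a * b) x = Dop F (smult c b + pCons 0 (a * b)) x" by simp
  also have "\<dots> = to_ac c * Dop F b x + F (Dop F (a * b) x)"
    by (simp add: Dop_add Dop_smult Dop_pCons[OF assms])
  also have "\<dots> = Dop F (pCons c a) (Dop F b x)"
    by (simp add: Dop_pCons[OF assms] pCons.IH)
  finally show ?case .
qed simp

lemma lin_Dop: 
  assumes "lin F" shows "lin (Dop F a)"
  unfolding lin_def Dop_def
  using lin_add[OF lin_funpow[OF assms]] lin_scal[OF lin_funpow[OF assms]]
  by (auto simp: sum.distrib distrib_left sum_distrib_left mult.left_commute)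

lemma Dop_0: "lin F \<Longrightarrow> Dop F a 0 = 0"
  using lin_zero lin_Dop by blast

lemma tw_eval_bound: "degree f \<le> N \<Longrightarrow> tw_eval q f x = (\<Sum>i\<le>N. coeff f i * x ^ (q ^ i))"
  unfolding tw_eval_def by (rule sum.mono_neutral_left) (auto simp: coeff_eq_0)

lemma tw_eval_add: "tw_eval q (f + g) x = tw_eval q f x + tw_eval q g x"
proof -
  define N where "N = max (degree f) (degree g)"
  have "degree (f + g) \<le> N" unfolding N_def by (rule degree_add_le) auto
  then show ?thesis
    by (subst (1 2 3) tw_eval_bound[where N = N]) (auto simp: N_def sum.distrib distrib_right)
qed

lemma tw_eval_zero [simp]: "tw_eval q 0 x = 0" by (simp add: tw_eval_def)

lemma tw_eval_sum: "tw_eval q (sum F A) x = (\<Sum>i\<in>A. tw_eval q (F i) x)"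
  by (induction A rule: infinite_finite_induct) (simp_all add: tw_eval_add)

lemma tw_eval_smult: "tw_eval q (smult c f) x = c * tw_eval q f x"
  by (subst (1 2) tw_eval_bound[where N = "degree f"]) (auto simp: degree_smult_le simp: sum_distrib_left mult.assoc)

lemma tw_eval_monom: "tw_eval q (monom c n) x = c * x ^ (q ^ n)"
  by (subst tw_eval_bound[where N = n]) (auto simp: coeff_monom degree_monom_le if_times0)

lemma tw_eval_one [simp]: "tw_eval q 1 x = x"
  by (simp add: tw_eval_def)

lemma lin_tw_eval: "lin (tw_eval CARD('a) (f :: 'a::{field,finite} alg_closure poly))"
  unfolding lin_def tw_eval_def
  by (auto simp: frob_pow_add sum.distrib distrib_left power_mult_distrib to_ac_frob
      sum_distrib_left mult.left_commute)

lemma tw_eval_mult: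
  fixes f g :: "'a::{field,finite} alg_closure poly"
  shows "tw_eval CARD('a) (tw_mult CARD('a) f g) x = tw_eval CARD('a) f (tw_eval CARD('a) g x)"
proof -
  define q where "q = CARD('a)"
  have "tw_eval q (tw_mult q f g) x =
     (\<Sum>i\<le>degree f. \<Sum>j\<le>degree g. coeff f i * coeff g j ^ (q ^ i) * x ^ (q ^ (i + j)))"
    unfolding tw_mult_def by (simp add: tw_eval_sum tw_eval_monom)
  also have "\<dots> = (\<Sum>i\<le>degree f. coeff f i * (\<Sum>j\<le>degree g. coeff g j * x ^ (q ^ j)) ^ (q ^ i))"
    unfolding q_def frob_pow_sum
    by (simp add: sum_distrib_left power_mult_distrib mult.assoc power_add mult_ac
        flip: power_mult)
  also have "\<dots> = tw_eval q f (tw_eval q g x)" by (simp add: tw_eval_def)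
  finally show ?thesis by (simp add: q_def)
qed

lemma tw_eval_pow:
  fixes f :: "'a::{field,finite} alg_closure poly"
  shows "tw_eval CARD('a) (tw_pow CARD('a) f n) x = (tw_eval CARD('a) f ^^ n) x"
  by (induction n arbitrary: x) (simp_all add: tw_eval_mult funpow_Suc_right del: funpow.simps)

lemma tw_eval_drinfeld:
  fixes phiT :: "'a::{field,finite} alg_closure poly"
  shows "tw_eval CARD('a) (drinfeld phiT a) x = Dop (tw_eval CARD('a) phiT) a x"
  unfolding drinfeld_def Dop_def by (simp add: tw_eval_sum tw_eval_smult tw_eval_pow)

lemma sep_card_roots:
  fixes p :: "'a::alg_closed_field poly"
  assumes "p \<noteq> 0" "\<forall>x. poly p x = 0 \<longrightarrow> poly (pderiv p) x \<noteq> 0"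
  shows "card {x. poly p x = 0} = degree p"
  using assms
proof (induction "degree p" arbitrary: p rule: less_induct)
  case (less p)
  show ?case
  proof (cases "degree p = 0")
    case True
    then obtain c where "p = [:c:]" by (metis degree_eq_zeroE)
    with less.prems True show ?thesis by simp
  next
    case False
    then obtain x where x: "poly p x = 0"
      using alg_closed_imp_poly_has_root by blast
    hence "[:-x, 1:] dvd p"
      using poly_eq_0_iff_dvd by blast
    then obtain q where p_eq: "p = [:-x, 1:] * q"
      by (elim dvdE)
    have q0: "q \<noteq> 0"
      using less.prems p_eq by auto
    have deg: "degree p = Suc (degree q)"
      unfolding p_eq using q0 by (subst degree_mult_eq) auto
    have dp: "pderiv p = q + [:-x, 1:] * pderiv q"
      unfolding p_eq by (simp only: pderiv_mult) (simp add: pderiv_pCons add.commute)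
    have qx: "poly q x \<noteq> 0"
      using less.prems(2) x dp by auto
    have q2: "\<forall>y. poly q y = 0 \<longrightarrow> poly (pderiv q) y \<noteq> 0"
    proof safe
      fix y assume y: "poly q y = 0" "poly (pderiv q) y = 0"
      hence "poly p y = 0" "poly (pderiv p) y = 0" using p_eq dp by auto
      thus False using less.prems(2) by blast
    qed
    have IH: "card {y. poly q y = 0} = degree q"
      using less.hyps[of q] deg q0 q2 by simp
    have "{y. poly p y = 0} = insert x {y. poly q y = 0}"
      using p_eq x by auto
    moreover have "x \<notin> {y. poly q y = 0}" using qx by simp
    moreover have "finite {y. poly q y = 0}" using q0 poly_roots_finite by blast
    ultimately show ?thesis using IH deg by simp
  qed
qed

lemma of_nat_card_zero: "of_nat CARD('a::{field,finite}) = (0::'a)"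
proof -
  have "(\<Sum>x\<in>(UNIV::'a set). x) = (\<Sum>x\<in>UNIV. x + 1)"
    by (rule sum.reindex_bij_witness[of _ "\<lambda>y. y + 1" "\<lambda>y. y - 1"]) auto
  also have "\<dots> = (\<Sum>x\<in>UNIV. x) + of_nat CARD('a)"
    by (simp add: sum.distrib)
  finally show ?thesis by (metis add_cancel_left_right)
qed

lemma of_nat_card_zero_ac: "of_nat CARD('a::{field,finite}) = (0::'a alg_closure)"
  by (metis of_nat_card_zero to_ac_0 to_ac_of_nat)

primrec Lp :: "'a::{field,finite} alg_closure \<Rightarrow> nat \<Rightarrow> 'a alg_closure poly" where
  "Lp al 0 = [:0, 1:]"
| "Lp al (Suc n) = smult al (Lp al n) + Lp al n ^ CARD('a)"

lemma poly_Lp: "poly (Lp al n) x = ((\<lambda>y. al * y + y ^ CARD('a)) ^^ n) (x::'a::{field,finite} alg_closure)"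
  by (induction n) simp_all

lemma Lp_deg: "degree (Lp (al::'a::{field,finite} alg_closure) n) = CARD('a) ^ n \<and> lead_coeff (Lp al n) = 1"
proof (induction n)
  case (Suc n)
  have q2: "CARD('a) \<ge> 2" by (rule card_ge2)
  have nz: "Lp al n \<noteq> 0" using Suc by auto
  have d1: "degree (Lp al n ^ CARD('a)) = CARD('a) ^ Suc n"
    using nz Suc by (simp add: degree_power_eq)
  have "degree (smult al (Lp al n)) \<le> CARD('a) ^ n" using Suc degree_smult_le by metis
  also have "CARD('a) ^ n < CARD('a) ^ Suc n" using q2 by simp
  finally have lt: "degree (smult al (Lp al n)) < degree (Lp al n ^ CARD('a))" using d1 by simp
  have lc: "lead_coeff (Lp al n ^ CARD('a)) = 1" using Suc by (metis lead_coeff_power power_one)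
  have "degree (Lp al (Suc n)) = CARD('a) ^ Suc n"
    using degree_add_eq_right[OF lt] d1 by simp
  moreover have "lead_coeff (Lp al (Suc n)) = 1"
    by (simp only: Lp.simps lead_coeff_add_le[OF lt] lc)
  ultimately show ?case by blast
qed simp

lemma Lp_pderiv: "pderiv (Lp (al::'a::{field,finite} alg_closure) n) = [:al ^ n:]"
proof (induction n)
  case 0
  then show ?case by (simp add: pderiv_pCons)
next
  case (Suc n)
  have "pderiv (Lp al n ^ CARD('a)) = 0"
    by (simp add: pderiv_power of_nat_card_zero_ac)
  then show ?case using Suc by (simp add: pderiv_add pderiv_smult)
qed

lemma card_Lp_roots:
  fixes al c :: "'a::{field,finite} alg_closure"
  assumes "R \<ge> 1" "al ^ R \<noteq> c"
  shows "card {x. poly (Lp al R - [:0, c:]) x = 0} = CARD('a) ^ R"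
    and "finite {x. poly (Lp al R - [:0, c:]) x = 0}"
proof -
  have q2: "CARD('a) \<ge> 2" by (rule card_ge2)
  have "CARD('a) ^ 1 \<le> CARD('a) ^ R" using assms q2 by (intro power_increasing) auto
  hence big: "CARD('a) ^ R \<ge> 2" using q2 by simp
  have lt: "degree [:0, c:] < degree (Lp al R)"
    using Lp_deg[of al R] big by (simp add: degree_pCons_le le_less_trans)
  have "degree (Lp al R + - [:0, c:]) = degree (Lp al R)"
    by (rule degree_add_eq_left) (simp only: degree_minus lt)
  hence dM: "degree (Lp al R - [:0, c:]) = CARD('a) ^ R"
    using Lp_deg[of al R] by (metis diff_conv_add_uminus)
  hence M0: "Lp al R - [:0, c:] \<noteq> 0" using big by auto
  have "pderiv (Lp al R - [:0, c:]) = [:al ^ R - c:]"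
    by (simp add: pderiv_diff Lp_pderiv pderiv_pCons)
  hence "\<forall>x. poly (Lp al R - [:0, c:]) x = 0 \<longrightarrow> poly (pderiv (Lp al R - [:0, c:])) x \<noteq> 0"
    using assms by simp
  then show "card {x. poly (Lp al R - [:0, c:]) x = 0} = CARD('a) ^ R"
    using sep_card_roots[OF M0] dM by simp
  show "finite {x. poly (Lp al R - [:0, c:]) x = 0}" using M0 poly_roots_finite by blast
qed

lemma map_poly_to_ac_add: "map_poly to_ac (p + q) = map_poly to_ac p + map_poly to_ac q"
  by (rule poly_eqI) (simp add: coeff_map_poly)

lemma map_poly_to_ac_diff: "map_poly to_ac (p - q) = map_poly to_ac p - map_poly to_ac q"
  by (rule poly_eqI) (simp add: coeff_map_poly)

lemma map_poly_to_ac_smult: "map_poly to_ac (smult a q) = smult (to_ac a) (map_poly to_ac q)"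
  by (rule poly_eqI) (simp add: coeff_map_poly)

lemma map_poly_to_ac_mult: "map_poly to_ac (p * q) = map_poly to_ac p * map_poly to_ac q"
  by (induction p) (simp_all add: map_poly_to_ac_add map_poly_to_ac_smult map_poly_pCons)

lemma map_poly_to_ac_1: "map_poly to_ac 1 = 1"
  by (simp add: one_pCons map_poly_pCons)

lemma lin_poly_zero:
  fixes G :: "'a::{field,finite} alg_closure poly"
  assumes "degree G \<le> d" "finite S" "card S > CARD('a) ^ d"
    and "\<forall>x\<in>S. tw_eval CARD('a) G x = 0"
  shows "G = 0"
proof (rule ccontr)
  assume G0: "G \<noteq> 0"
  define q where "q = CARD('a)"
  have q2: "q > 1" using card_ge2[where 'a='a] q_def by simp
  define L where "L = (\<Sum>i\<le>d. monom (coeff G i) (q ^ i))"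
  have pL: "poly L x = tw_eval q G x" for x
    unfolding L_def by (simp add: tw_eval_bound[OF assms(1)] poly_sum poly_monom)
  obtain i0 where i0: "coeff G i0 \<noteq> 0" using G0 by (metis poly_eqI coeff_0)
  hence i0d: "i0 \<le> d" using assms(1) le_degree order.trans by blast
  have "coeff L (q ^ i0) = (\<Sum>i\<le>d. if i = i0 then coeff G i else 0)"
    unfolding L_def coeff_sum coeff_monom using q2 by (intro sum.cong) auto
  also have "\<dots> = coeff G i0" using i0d by simp
  finally have L0: "L \<noteq> 0" using i0 by auto
  have dL: "degree L \<le> q ^ d"
    unfolding L_def
    by (rule degree_sum_le) (use q2 in \<open>auto intro: order.trans[OF degree_monom_le] power_increasing\<close>)
  have "S \<subseteq> {x. poly L x = 0}" using assms(4) pL q_def by auto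
  hence "card S \<le> card {x. poly L x = 0}"
    by (intro card_mono poly_roots_finite L0)
  also have "\<dots> \<le> degree L" by (rule card_poly_roots_bound[OF L0])
  finally show False using dL assms(3) q_def by simp
qed

lemma tw_mult_0 [simp]: "tw_mult q 0 g = 0"
  by (simp add: tw_mult_def)

theorem lemma3p3:
  fixes r \<delta> R l m s :: nat
    and a :: "nat \<Rightarrow> 'q::{field,finite}"
    and h P :: "'q poly"
    and \<alpha> :: "'q alg_closure"
    and g :: "nat \<Rightarrow> 'q alg_closure poly"
    and f :: "'q alg_closure poly"
  assumes "r \<ge> 1" and "\<delta> \<ge> 2" and "R = r + \<delta> - 1"
    and "inj_on a {..<l}" and "\<forall>i<l. a i \<noteq> 0"
    and "h = (\<Prod>i<l. monom 1 R - [:a i:])"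
    and "lead_coeff P = 1" and "irreducible P" and "degree P = m"
    and "h dvd (P - 1)"
    and "poly (map_poly to_ac P) \<alpha> = 0"
    and "\<forall>k\<le>s. degree (g k) \<le> r - 1"
    and "\<forall>k\<le>s. \<forall>i. coeff (g k) i \<in> Fqm m"
    and "f = (\<Sum>k\<le>s. tw_mult CARD('q) (g k)
                 (tw_pow CARD('q) (drinfeld [:\<alpha>, 1:] (monom 1 R)) k))"
    and "f \<noteq> 0"
    and "s + 1 \<le> l"
  shows "\<exists>x \<in> drinfeld_torsion [:\<alpha>, 1:] h. tw_eval CARD('q) f x \<noteq> 0"
proof (rule ccontr)
  assume contra: "\<not> ?thesis"
  hence fz: "\<And>x. x \<in> drinfeld_torsion [:\<alpha>, 1:] h \<Longrightarrow> tw_eval CARD('q) f x = 0" by blast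
  define \<Phi> where "\<Phi> = tw_eval CARD('q) [:\<alpha>, 1:]"
  have \<Phi>_eq: "\<Phi> = (\<lambda>y. \<alpha> * y + y ^ CARD('q))"
    by (rule ext) (simp add: \<Phi>_def tw_eval_def)
  have lin\<Phi>: "lin \<Phi>" unfolding \<Phi>_def by (rule lin_tw_eval)
  define c where "c j = to_ac (a j)" for j
  define S where "S j = {x. (\<Phi> ^^ R) x = c j * x}" for j
  have R1: "R \<ge> 1" "r - 1 < R" using assms(1,2,3) by auto
  define Hf where "Hf j = (monom 1 R - [:a j:] :: 'q poly)" for j
  have hsplit: "h = (\<Prod>i\<in>{..<l}-{j}. Hf i) * Hf j" if "j < l" for j
    unfolding assms(6) Hf_def using that by (subst prod.remove[of _ j]) (auto simp: mult.commute)
  have DHf: "Dop \<Phi> (Hf j) x = (\<Phi> ^^ R) x - c j * x" for j x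
    by (simp add: Hf_def Dop_diff Dop_monom1 Dop_const c_def)
  have tors: "x \<in> drinfeld_torsion [:\<alpha>, 1:] h" if "j < l" "x \<in> S j" for j x
  proof -
    have "Dop \<Phi> (Hf j) x = 0" using that by (simp add: DHf S_def)
    hence "Dop \<Phi> h x = 0" using hsplit[OF that(1)] Dop_mult[OF lin\<Phi>] Dop_0[OF lin\<Phi>] by metis
    thus ?thesis unfolding drinfeld_torsion_def tw_eval_drinfeld \<Phi>_def by simp
  qed
  have evalf: "tw_eval CARD('q) f x = (\<Sum>k\<le>s. c j ^ k * tw_eval CARD('q) (g k) x)"
    if "x \<in> S j" for j x
  proof -
    have Dr: "tw_eval CARD('q) (drinfeld [:\<alpha>, 1:] (monom 1 R)) = \<Phi> ^^ R"
      by (rule ext) (simp add: tw_eval_drinfeld Dop_monom1 \<Phi>_def)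
    have it: "((\<Phi> ^^ R) ^^ k) x = c j ^ k * x" for k
    proof (induction k)
      case (Suc k)
      have "((\<Phi> ^^ R) ^^ Suc k) x = (\<Phi> ^^ R) (to_ac (a j ^ k) * x)"
        using Suc by (simp add: c_def)
      also have "\<dots> = to_ac (a j ^ k) * (\<Phi> ^^ R) x"
        by (rule lin_scal[OF lin_funpow[OF lin\<Phi>]])
      finally show ?case using that by (simp add: S_def c_def)
    qed simp
    have "tw_eval CARD('q) f x = (\<Sum>k\<le>s. tw_eval CARD('q) (g k) (c j ^ k * x))"
      unfolding assms(14) by (simp add: tw_eval_sum tw_eval_mult tw_eval_pow Dr it)
    also have "\<dots> = (\<Sum>k\<le>s. c j ^ k * tw_eval CARD('q) (g k) x)"
      unfolding c_def by (intro sum.cong refl) (metis to_ac_power lin_scal[OF lin_tw_eval])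
    finally show ?thesis .
  qed
  have Scard: "finite (S j) \<and> card (S j) = CARD('q) ^ R" if "j < l" for j
  proof -
    obtain Q where Q: "P - 1 = h * Q" using assms(10) by (elim dvdE)
    have "map_poly to_ac P - 1 = map_poly to_ac (Hf j) * map_poly to_ac ((\<Prod>i\<in>{..<l}-{j}. Hf i) * Q)"
      using Q hsplit[OF that]
      by (metis map_poly_to_ac_1 map_poly_to_ac_diff map_poly_to_ac_mult mult.commute mult.left_commute)
    hence "poly (map_poly to_ac P) \<alpha> - 1 = poly (map_poly to_ac (Hf j)) \<alpha> * poly (map_poly to_ac ((\<Prod>i\<in>{..<l}-{j}. Hf i) * Q)) \<alpha>"
      by (metis poly_1 poly_diff poly_mult)
    moreover have "poly (map_poly to_ac (Hf j)) \<alpha> = \<alpha> ^ R - c j"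
      by (simp add: Hf_def map_poly_to_ac_diff map_poly_monom poly_monom c_def map_poly_pCons)
    ultimately have ne: "\<alpha> ^ R \<noteq> c j" using assms(11) by auto
    have "S j = {x. poly (Lp \<alpha> R - [:0, c j:]) x = 0}"
      by (auto simp: S_def poly_Lp \<Phi>_eq)
    then show ?thesis using card_Lp_roots[OF R1(1) ne] by simp
  qed
  define G where "G j = (\<Sum>k\<le>s. smult (c j ^ k) (g k))" for j
  have G0: "G j = 0" if "j < l" for j
  proof (rule lin_poly_zero[where d = "r - 1" and S = "S j"])
    show "degree (G j) \<le> r - 1"
      unfolding G_def using assms(12)
      by (intro degree_sum_le) (auto intro: order.trans[OF degree_smult_le])
    show "finite (S j)" using Scard[OF that] by simp
    show "CARD('q) ^ (r - 1) < card (S j)"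
      using Scard[OF that] R1 card_ge2[where 'a='q] by simp
    show "\<forall>x\<in>S j. tw_eval CARD('q) (G j) x = 0"
    proof
      fix x assume x: "x \<in> S j"
      have "tw_eval CARD('q) (G j) x = tw_eval CARD('q) f x"
        unfolding evalf[OF x] G_def by (simp add: tw_eval_sum tw_eval_smult)
      also have "\<dots> = 0" using fz tors[OF that x] by blast
      finally show "tw_eval CARD('q) (G j) x = 0" .
    qed
  qed
  have gz: "g k = 0" if "k \<le> s" for k
  proof (rule poly_eqI)
    fix i
    define V where "V = (\<Sum>k\<le>s. monom (coeff (g k) i) k)"
    have Vroot: "poly V (c j) = 0" if "j < l" for j
    proof -
      have "poly V (c j) = coeff (G j) i"
        unfolding V_def G_def by (simp add: poly_sum poly_monom coeff_sum mult.commute)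
      thus ?thesis using G0[OF that] by simp
    qed
    have "V = 0"
    proof (rule ccontr)
      assume V0: "V \<noteq> 0"
      have "c ` {..<l} \<subseteq> {x. poly V x = 0}" using Vroot by auto
      hence "card (c ` {..<l}) \<le> card {x. poly V x = 0}"
        by (intro card_mono poly_roots_finite V0)
      also have "\<dots> \<le> degree V" by (rule card_poly_roots_bound[OF V0])
      also have "degree V \<le> s" unfolding V_def
        by (rule degree_sum_le) (auto intro: order.trans[OF degree_monom_le])
      finally have "card (c ` {..<l}) \<le> s" .
      moreover have "inj_on c {..<l}" using assms(4) unfolding c_def inj_on_def by simp
      ultimately show False using card_image assms(16) by fastforce
    qed
    hence "coeff V k = 0" by simp
    moreover have "coeff V k = coeff (g k) i" unfolding V_def by (rule coeff_sum_monom[OF that])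
    ultimately show "coeff (g k) i = coeff 0 i" by simp
  qed
  have "f = 0" unfolding assms(14) using gz by simp
  thus False using assms(15) by simp
qed

end
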